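(* Let $Q=\prod_{n\in\mathbb{Z}}[0,1]$ with the metric $D(\hat t,\hat s)=\sum_{n\in\mathbb{Z}}|t_n-s_n|/2^{|n|}$ and let $\sigma:Q\to Q$ be the shift map. Let $a=(\dots,0,0,0,\dots)$ and, for $n\in\mathbb{Z}$ and $p\in\{1,2,\dots\}$, let $b^p_n\in Q$ be the sequence whose $n$-th coordinate is $1/p$ and all other coordinates are $0$. Let $S_Q=\{a\}\cup\{b^p_n: n\in\mathbb{Z},\ p\ge 1\}$ (a closed $\sigma$-invariant subset) and $\sigma_{S_Q}=\sigma|_{S_Q}$. Then $h(\sigma_{S_Q})=0$ but $h(2^{\sigma_{S_Q}})=\infty$.
   Context: $2^{S_Q}$ is the hyperspace of nonempty closed subsets of $S_Q$ with the Hausdorff metric and $2^{\sigma_{S_Q}}(A)=\sigma(A)$. $h$ denotes topological entropy. *)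

theory Defs
  imports "HOL-Analysis.Analysis"
begin

definition bowen_dist :: "('a \<Rightarrow> 'a \<Rightarrow> real) \<Rightarrow> ('a \<Rightarrow> 'a) \<Rightarrow> nat \<Rightarrow> 'a \<Rightarrow> 'a \<Rightarrow> real" where
  "bowen_dist d f n x y = Max ((\<lambda>k. d ((f ^^ k) x) ((f ^^ k) y)) ` {..<n})"

definition separated_set ::
  "'a set \<Rightarrow> ('a \<Rightarrow> 'a \<Rightarrow> real) \<Rightarrow> ('a \<Rightarrow> 'a) \<Rightarrow> nat \<Rightarrow> real \<Rightarrow> 'a set \<Rightarrow> bool" where
  "separated_set X d f n \<epsilon> E \<longleftrightarrow> E \<subseteq> X \<and>
     (\<forall>x\<in>E. \<forall>y\<in>E. x \<noteq> y \<longrightarrow> bowen_dist d f n x y > \<epsilon>)"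

definition sep_growth ::
  "'a set \<Rightarrow> ('a \<Rightarrow> 'a \<Rightarrow> real) \<Rightarrow> ('a \<Rightarrow> 'a) \<Rightarrow> real \<Rightarrow> nat \<Rightarrow> ereal" where
  "sep_growth X d f \<epsilon> n =
     (SUP E\<in>{E. finite E \<and> separated_set X d f n \<epsilon> E}. ereal (ln (real (card E)) / real n))"

text \<open>Bowen's topological entropy h(f) = lim_{\<epsilon>\<rightarrow>0} limsup_n (1/n) log s(n,\<epsilon>);
  the limit is monotone in \<epsilon>, hence equals the supremum over \<epsilon> > 0.\<close>
definition top_entropy :: "'a set \<Rightarrow> ('a \<Rightarrow> 'a \<Rightarrow> real) \<Rightarrow> ('a \<Rightarrow> 'a) \<Rightarrow> ereal" where
  "top_entropy X d f =
     (SUP \<epsilon>\<in>{0<..}. limsup (\<lambda>n. sep_growth X d f \<epsilon> (Suc n)))"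

definition metric_closed_in :: "('a \<Rightarrow> 'a \<Rightarrow> real) \<Rightarrow> 'a set \<Rightarrow> 'a set \<Rightarrow> bool" where
  "metric_closed_in d X A \<longleftrightarrow> A \<subseteq> X \<and>
     (\<forall>x\<in>X. (\<forall>e>0. \<exists>y\<in>A. d x y < e) \<longrightarrow> x \<in> A)"

definition hyperspace :: "('a \<Rightarrow> 'a \<Rightarrow> real) \<Rightarrow> 'a set \<Rightarrow> 'a set set" where
  "hyperspace d X = {A. A \<noteq> {} \<and> metric_closed_in d X A}"

definition hausdorff_metric :: "('a \<Rightarrow> 'a \<Rightarrow> real) \<Rightarrow> 'a set \<Rightarrow> 'a set \<Rightarrow> real" where
  "hausdorff_metric d A B =
     max (SUP a\<in>A. INF b\<in>B. d a b) (SUP b\<in>B. INF a\<in>A. d a b)"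

definition Q :: "(int \<Rightarrow> real) set" where
  "Q = {t. \<forall>n. 0 \<le> t n \<and> t n \<le> 1}"

definition QD :: "(int \<Rightarrow> real) \<Rightarrow> (int \<Rightarrow> real) \<Rightarrow> real" where
  "QD t s = (\<Sum>\<^sub>\<infinity>n::int. \<bar>t n - s n\<bar> / 2 ^ nat \<bar>n\<bar>)"

definition shift :: "(int \<Rightarrow> real) \<Rightarrow> (int \<Rightarrow> real)" where
  "shift t = (\<lambda>n. t (n + 1))"

definition pt_a :: "int \<Rightarrow> real" where
  "pt_a = (\<lambda>_. 0)"

definition pt_b :: "nat \<Rightarrow> int \<Rightarrow> (int \<Rightarrow> real)" where
  "pt_b p n = (\<lambda>m. if m = n then 1 / real p else 0)"

definition S_Q :: "(int \<Rightarrow> real) set" where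
  "S_Q = {pt_a} \<union> {pt_b p n | p n. p \<ge> 1}"

end

theory Submission
  imports Defs
begin

lemma QD_pt_b:
  "QD (pt_b p k) (pt_b q l) = (if k = l then \<bar>1/real p - 1/real q\<bar> / 2 ^ nat \<bar>k\<bar>
      else 1/real p / 2 ^ nat \<bar>k\<bar> + 1/real q / 2 ^ nat \<bar>l\<bar>)"
proof -
  let ?f = "\<lambda>n. \<bar>pt_b p k n - pt_b q l n\<bar> / 2 ^ nat \<bar>n\<bar> :: real"
  have "QD (pt_b p k) (pt_b q l) = infsum ?f {k,l}"
    unfolding QD_def by (rule infsum_cong_neutral) (auto simp: pt_b_def)
  also have "\<dots> = sum ?f {k,l}" by simp
  finally show ?thesis by (cases "k = l") (auto simp: pt_b_def)
qed

lemma pt_a_eq: "pt_a = pt_b 0 k"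
  by (simp add: pt_a_def pt_b_def fun_eq_iff)

lemma S_Q_cases: "x \<in> S_Q \<Longrightarrow> \<exists>p k. x = pt_b p k"
  unfolding S_Q_def using pt_a_eq by auto

lemma shift_pt_b: "(shift ^^ j) (pt_b p k) = pt_b p (k - int j)"
  by (induction j) (auto simp: shift_def pt_b_def fun_eq_iff)

lemma QD_sym: "QD (pt_b p k) (pt_b q l) = QD (pt_b q l) (pt_b p k)"
  by (simp add: QD_pt_b abs_minus_commute)

lemma QD_a: "QD (pt_b p k) pt_a = 1 / real p / 2 ^ nat \<bar>k\<bar>"
  by (cases "k = 0") (simp_all add: pt_a_eq[of 0] QD_pt_b)

lemma QD_tri: "QD (pt_b p k) (pt_b q l) \<le> QD (pt_b p k) pt_a + QD (pt_b q l) pt_a"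
proof (cases "k = l")
  case True
  have "\<bar>1/real p - 1/real q\<bar> \<le> 1/real p + 1/real q"
    by (smt (verit) of_nat_0_le_iff divide_nonneg_nonneg)
  then have "\<bar>1/real p - 1/real q\<bar> / 2 ^ nat \<bar>k\<bar> \<le> (1/real p + 1/real q) / 2 ^ nat \<bar>k\<bar>"
    by (simp add: divide_right_mono)
  then show ?thesis using True by (simp add: QD_pt_b QD_a add_divide_distrib)
qed (simp add: QD_pt_b QD_a)

lemma QD_zero: "QD (pt_b p k) (pt_b p k) = 0"
  by (simp add: QD_pt_b)

lemma QD_pos: "pt_b p k \<noteq> pt_b q l \<Longrightarrow> QD (pt_b p k) (pt_b q l) > 0"
proof (cases "k = l")
  case True
  assume ne: "pt_b p k \<noteq> pt_b q l"
  then have "1/real p \<noteq> 1/real q" using True by (auto simp: pt_b_def)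
  then show ?thesis using True by (simp add: QD_pt_b)
next
  case False
  assume ne: "pt_b p k \<noteq> pt_b q l"
  then have "p \<noteq> 0 \<or> q \<noteq> 0" by (auto simp: pt_b_def fun_eq_iff split: if_splits)
  then show ?thesis using False by (auto simp: QD_pt_b add_pos_nonneg add_nonneg_pos)
qed

lemma funpow_image: fixes f :: "'a \<Rightarrow> 'a" shows "((\<lambda>A. f ` A) ^^ i) A = (f ^^ i) ` A"
  by (induction i) (simp_all add: image_comp)

lemma hyper_finite:
  assumes "finite A" "A \<noteq> {}" "A \<subseteq> S_Q"
  shows "A \<in> hyperspace QD S_Q"
  unfolding hyperspace_def metric_closed_in_def
proof (intro CollectI conjI assms ballI impI)
  fix x assume x: "x \<in> S_Q" and cl: "\<forall>e>0. \<exists>y\<in>A. QD x y < e"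
  show "x \<in> A"
  proof (rule ccontr)
    assume nx: "x \<notin> A"
    have pos: "QD x y > 0" if hy: "y \<in> A" for y
    proof -
      obtain p k where "x = pt_b p k" using S_Q_cases x by blast
      moreover obtain q l where "y = pt_b q l" using S_Q_cases[of y] hy assms(3) by blast
      ultimately show ?thesis using QD_pos nx hy by metis
    qed
    let ?e = "Min (QD x ` A)"
    have "?e > 0" using pos assms by (simp add: Min_gr_iff)
    then obtain y where "y \<in> A" "QD x y < ?e" using cl by blast
    moreover have "?e \<le> QD x y" using \<open>y \<in> A\<close> assms by simp
    ultimately show False by simp
  qed
qed

lemma inv_gap:
  assumes "p \<in> {1..m}" "q \<in> {1..m}" "p \<noteq> q"
  shows "\<bar>1/real p - 1/real q\<bar> \<ge> 1 / (real m)^2"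
proof -
  have "\<bar>1/real p - 1/real q\<bar> = \<bar>real q - real p\<bar> / (real p * real q)"
    using assms by (simp add: field_simps)
  also have "\<dots> \<ge> 1 / (real p * real q)"
    using assms by (intro divide_right_mono) auto
  moreover have "1 / (real p * real q) \<ge> 1 / (real m)^2"
    using assms by (intro divide_left_mono) (auto simp: power2_eq_square intro!: mult_mono)
  ultimately show ?thesis by linarith
qed

lemma haus_lower:
  assumes "finite X" "x \<in> X" "Y \<noteq> {}" "\<And>y. y \<in> Y \<Longrightarrow> QD x y \<ge> c"
  shows "hausdorff_metric QD X Y \<ge> c"
proof -
  have "c \<le> (INF b\<in>Y. QD x b)" using assms by (intro cINF_greatest) auto
  also have "\<dots> \<le> (SUP a\<in>X. INF b\<in>Y. QD a b)"
    using assms by (intro cSUP_upper) auto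
  finally show ?thesis unfolding hausdorff_metric_def by simp
qed

lemma shift_pt_a: "(shift ^^ i) pt_a = pt_a"
  by (induction i) (auto simp: shift_def pt_a_def)

lemma far_bound:
  assumes e: "\<epsilon> > 0" and p: "p \<ge> 1" and R: "real R \<ge> 2/\<epsilon>"
    and h: "1 / real p / 2 ^ a > \<epsilon>/2"
  shows "p \<le> R \<and> a < R"
proof -
  have pa: "real p * 2 ^ a > 0" using p by simp
  from h have "1 > \<epsilon>/2 * (real p * 2 ^ a)" using pa by (simp add: field_simps)
  then have "real p * 2 ^ a < 2/\<epsilon>" using e by (simp add: field_simps)
  then have lt: "real p * 2 ^ a < real R" using R by linarith
  have "(1::real) \<le> 2 ^ a" by simp
  then have "real p \<le> real p * 2 ^ a" using p by (simp add: mult_le_cancel_left1)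
  then have "p \<le> R" using lt by linarith
  moreover have "(2::real) ^ a \<le> real p * 2 ^ a" using p by simp
  then have "(2::real) ^ a < real R" using lt by linarith
  then have "2 ^ a < R" by (metis of_nat_less_iff of_nat_numeral of_nat_power)
  then have "a < R" using less_exp[of a] by linarith
  ultimately show ?thesis by simp
qed

lemma card_upper:
  assumes e: "\<epsilon> > 0" and n: "n \<ge> 1" and E: "finite E" "separated_set S_Q QD shift n \<epsilon> E"
  shows "card E \<le> (1 + nat \<lceil>2/\<epsilon>\<rceil> * (2 * nat \<lceil>2/\<epsilon>\<rceil> + 2)) * n"
proof -
  define R where "R = nat \<lceil>2/\<epsilon>\<rceil>"
  have R: "real R \<ge> 2/\<epsilon>" unfolding R_def by linarith
  define F where "F = {x \<in> S_Q. \<forall>j<n. QD ((shift ^^ j) x) pt_a \<le> \<epsilon>/2}"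
  define G where "G = (\<lambda>(p,k). pt_b p k) ` ({1..R} \<times> {- int R..int n + int R})"
  have ES: "E \<subseteq> S_Q" using E unfolding separated_set_def by blast
  have c1: "card (E \<inter> F) \<le> 1"
  proof -
    have "\<forall>x\<in>E \<inter> F. \<forall>y\<in>E \<inter> F. x = y"
    proof (intro ballI, rule ccontr)
      fix x y assume x: "x \<in> E \<inter> F" and y: "y \<in> E \<inter> F" and ne: "x \<noteq> y"
      obtain p k where xp: "x = pt_b p k" using S_Q_cases[of x] x ES by blast
      obtain q l where yq: "y = pt_b q l" using S_Q_cases[of y] y ES by blast
      have "bowen_dist QD shift n x y \<le> \<epsilon>"
      proof -
        have ne: "{..<n} \<noteq> {}" using n by (simp add: lessThan_empty_iff)
        have "\<forall>t\<in>(\<lambda>j. QD ((shift ^^ j) x) ((shift ^^ j) y)) ` {..<n}. t \<le> \<epsilon>"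
        proof
        fix t assume "t \<in> (\<lambda>j. QD ((shift ^^ j) x) ((shift ^^ j) y)) ` {..<n}"
        then obtain j where j: "j < n" "t = QD ((shift ^^ j) x) ((shift ^^ j) y)" by auto
        have "t \<le> QD ((shift ^^ j) x) pt_a + QD ((shift ^^ j) y) pt_a"
          unfolding j(2) xp yq shift_pt_b by (rule QD_tri)
        also have "\<dots> \<le> \<epsilon>/2 + \<epsilon>/2" using x y j(1) unfolding F_def by (intro add_mono) auto
        finally show "t \<le> \<epsilon>" by simp
        qed
        then show ?thesis using ne unfolding bowen_dist_def by (subst Max_le_iff) auto
      qed
      moreover have "bowen_dist QD shift n x y > \<epsilon>" using E x y ne unfolding separated_set_def by blast
      ultimately show False by simp
    qed
    then show ?thesis using card_le_Suc0_iff_eq[of "E \<inter> F"] E(1) by simp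
  qed
  have EG: "E - F \<subseteq> G"
  proof
    fix x assume x: "x \<in> E - F"
    then have xS: "x \<in> S_Q" using ES by blast
    then have "x = pt_a \<or> (\<exists>p k. p \<ge> 1 \<and> x = pt_b p k)" unfolding S_Q_def by blast
    moreover have "pt_a \<in> F" using e unfolding F_def S_Q_def
      using QD_a[of 0 0] by (simp add: shift_pt_a pt_a_eq[of 0, symmetric])
    ultimately obtain p k where p: "p \<ge> 1" and xp: "x = pt_b p k" using x by blast
    then obtain j where j: "j < n" "QD ((shift ^^ j) x) pt_a > \<epsilon>/2" using x xS unfolding F_def by force
    have "1 / real p / 2 ^ nat \<bar>k - int j\<bar> > \<epsilon>/2" using j(2) unfolding xp shift_pt_b QD_a by simp
    from far_bound[OF e p R this] have "p \<le> R" "nat \<bar>k - int j\<bar> < R" by auto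
    then have "p \<in> {1..R}" "k \<in> {- int R..int n + int R}" using p j(1) by auto
    then show "x \<in> G" unfolding G_def xp by blast
  qed
  have cG: "card G \<le> R * (n + 2 * R + 1)"
  proof -
    have "card G \<le> card ({1..R} \<times> {- int R..int n + int R})" unfolding G_def by (rule card_image_le) simp
    also have "\<dots> = R * nat (int n + int R + 1 + int R)" by (simp add: card_cartesian_product ac_simps)
    also have "nat (int n + int R + 1 + int R) = n + 2 * R + 1" by simp
    finally show ?thesis .
  qed
  have "card E \<le> card (E \<inter> F) + card (E - F)"
    by (metis Int_Diff_Un Int_Diff_disjoint E(1) card_Un_disjoint finite_Diff finite_Int order_refl)
  also have "\<dots> \<le> 1 + R * (n + 2 * R + 1)"
    using c1 card_mono[OF _ EG] cG unfolding G_def by (intro add_mono) (auto intro: order_trans)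
  also have "\<dots> \<le> (1 + R * (2 * R + 2)) * n"
  proof -
    obtain n' where n': "n = Suc n'" using n by (cases n) auto
    have "R * n' \<le> R * (2 * R + 2) * n'" by simp
    then show ?thesis unfolding n' by (simp add: algebra_simps)
  qed
  finally show ?thesis unfolding R_def .
qed

lemma sep_lower:
  assumes m: "m \<ge> 1" and n: "n = Suc n'"
  shows "sep_growth (hyperspace QD S_Q) (hausdorff_metric QD) (\<lambda>A. shift ` A) (1/(2*(real m)^2)) n
           \<ge> ereal (ln (real m))"
proof -
  define W where "W = PiE {..<n} (\<lambda>_. {1..m})"
  define Aw where "Aw w = insert pt_a ((\<lambda>j. pt_b (w j) (int j)) ` {..<n})" for w :: "nat \<Rightarrow> nat"
  define \<epsilon> where "\<epsilon> = 1/(2*(real m)^2)"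
  have mpos: "real m > 0" using m by simp
  have eps: "\<epsilon> < 1/(real m)^2" unfolding \<epsilon>_def using mpos by (simp add: field_simps)
  have mm: "1/real m \<ge> 1/(real m)^2" using m by (simp add: power2_eq_square field_simps)
  have key: "QD (pt_b (w i) 0) y \<ge> 1/(real m)^2"
    if w: "w \<in> W" and v: "v \<in> W" and i: "i < n" and ne: "w i \<noteq> v i"
      and y: "y \<in> (shift ^^ i) ` Aw v" for w v i y
  proof -
    have wi: "w i \<in> {1..m}" "v i \<in> {1..m}" using w v i unfolding W_def by (blast intro: PiE_mem)+
    have wi2: "1/real (w i) \<ge> 1/real m" using wi by (auto intro!: divide_left_mono)
    from y consider "y = (shift ^^ i) pt_a" | j where "j < n" "y = (shift ^^ i) (pt_b (v j) (int j))"
      unfolding Aw_def by auto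
    then show ?thesis
    proof cases
      case 1
      then have "y = pt_a" by (simp add: shift_pt_a)
      then show ?thesis using wi2 mm by (simp add: QD_a)
    next
      case (2 j)
      show ?thesis
      proof (cases "j = i")
        case True
        then show ?thesis using 2 inv_gap[OF wi ne] by (simp add: shift_pt_b QD_pt_b)
      next
        case False
        then have "QD (pt_b (w i) 0) y = 1/real (w i) + 1 / real (v j) / 2 ^ nat \<bar>int j - int i\<bar>"
          using 2 by (simp add: shift_pt_b QD_pt_b)
        also have "\<dots> \<ge> 1/real (w i)" by simp
        finally show ?thesis using wi2 mm by linarith
      qed
    qed
  qed
  have mem: "pt_b (w i) 0 \<in> (shift ^^ i) ` Aw w" if "i < n" for w i
    unfolding Aw_def using that by (intro image_eqI[of _ _ "pt_b (w i) (int i)"]) (auto simp: shift_pt_b)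
  have diff: "\<exists>i<n. w i \<noteq> v i" if "w \<in> W" "v \<in> W" "w \<noteq> v" for w v
    using that PiE_ext[of w "{..<n}" "\<lambda>_. {1..m}" v] unfolding W_def by auto
  have finA: "finite (Aw w)" for w unfolding Aw_def by simp
  have AS: "Aw w \<in> hyperspace QD S_Q" if "w \<in> W" for w
  proof (rule hyper_finite[OF finA])
    show "Aw w \<noteq> {}" unfolding Aw_def by simp
    have "w j \<ge> 1" if "j < n" for j using \<open>w \<in> W\<close> that unfolding W_def
      by (metis PiE_mem atLeastAtMost_iff lessThan_iff)
    then show "Aw w \<subseteq> S_Q" unfolding Aw_def S_Q_def by blast
  qed
  have inj: "inj_on Aw W"
  proof (rule inj_onI, rule ccontr)
    fix w v assume w: "w \<in> W" and v: "v \<in> W" and eq: "Aw w = Aw v" and ne: "w \<noteq> v"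
    obtain i where i: "i < n" "w i \<noteq> v i" using diff[OF w v ne] by blast
    have "pt_b (w i) 0 \<in> (shift ^^ i) ` Aw v" using mem[OF i(1), of w] eq by simp
    from key[OF w v i this] mpos show False by (simp add: QD_zero)
  qed
  have sepE: "separated_set (hyperspace QD S_Q) (hausdorff_metric QD) (\<lambda>A. shift ` A) n \<epsilon> (Aw ` W)"
    unfolding separated_set_def
  proof (intro conjI ballI impI)
    show "Aw ` W \<subseteq> hyperspace QD S_Q" using AS by auto
    fix X Y assume X: "X \<in> Aw ` W" and Y: "Y \<in> Aw ` W" and XY: "X \<noteq> Y"
    then obtain w v where w: "w \<in> W" "X = Aw w" and v: "v \<in> W" "Y = Aw v" by blast
    then have "w \<noteq> v" using XY by auto
    then obtain i where i: "i < n" "w i \<noteq> v i" using diff[OF w(1) v(1)] by blast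
    have "hausdorff_metric QD ((shift ^^ i) ` X) ((shift ^^ i) ` Y) \<ge> 1/(real m)^2"
      unfolding w(2) v(2)
    proof (rule haus_lower[OF _ mem[OF i(1)]])
      show "finite ((shift ^^ i) ` Aw w)" using finA by simp
      show "(shift ^^ i) ` Aw v \<noteq> {}" by (simp add: Aw_def)
    qed (rule key[OF w(1) v(1) i])
    also have "\<dots> \<le> bowen_dist (hausdorff_metric QD) (\<lambda>A. shift ` A) n X Y"
      unfolding bowen_dist_def funpow_image using i by (intro Max_ge) auto
    finally show "bowen_dist (hausdorff_metric QD) (\<lambda>A. shift ` A) n X Y > \<epsilon>" using eps by linarith
  qed
  have cardE: "card (Aw ` W) = m ^ n"
    using card_image[OF inj] by (simp add: W_def card_PiE)
  have "ereal (ln (real m)) = ereal (ln (real (card (Aw ` W))) / real n)"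
  proof -
    have "ln (real (card (Aw ` W))) = real n * ln (real m)"
      using cardE mpos by (simp add: ln_realpow[symmetric])
    then show ?thesis using n by simp
  qed
  also have "\<dots> \<le> sep_growth (hyperspace QD S_Q) (hausdorff_metric QD) (\<lambda>A. shift ` A) \<epsilon> n"
    unfolding sep_growth_def using sepE finite_imageI[OF finite_PiE[of "{..<n}" "\<lambda>_. {1..m}"], of Aw]
    unfolding W_def by (intro SUP_upper) auto
  finally show ?thesis unfolding \<epsilon>_def .
qed

lemma lim0:
  assumes K: "K > 0"
  shows "(\<lambda>n. ln (K * real (Suc n)) / real (Suc n)) \<longlonglongrightarrow> 0"
proof -
  have eq: "ln (K * real (Suc n)) / real (Suc n) = ln K * inverse (real (Suc n)) + ln (real (Suc n)) / real (Suc n)" for n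
    using K by (simp add: ln_mult add_divide_distrib divide_inverse distrib_right)
  have a: "(\<lambda>n. ln (real (Suc n)) / real (Suc n)) \<longlonglongrightarrow> 0"
    using lim_ln_over_n filterlim_sequentially_Suc[of "\<lambda>n. ln (real n) / real n"] by simp
  have b: "(\<lambda>n. ln K * inverse (real (Suc n))) \<longlonglongrightarrow> ln K * 0"
    by (intro tendsto_mult tendsto_const LIMSEQ_inverse_real_of_nat)
  show ?thesis unfolding eq using tendsto_add[OF b a] by simp
qed

lemma part1: "top_entropy S_Q QD shift = 0"
proof -
  have each: "limsup (\<lambda>n. sep_growth S_Q QD shift \<epsilon> (Suc n)) = 0" if e: "\<epsilon> > 0" for \<epsilon>
  proof (rule antisym)
    define K where "K = real (1 + nat \<lceil>2/\<epsilon>\<rceil> * (2 * nat \<lceil>2/\<epsilon>\<rceil> + 2))"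
    have K: "K \<ge> 1" unfolding K_def by simp
    have up: "sep_growth S_Q QD shift \<epsilon> (Suc n) \<le> ereal (ln (K * real (Suc n)) / real (Suc n))" for n
      unfolding sep_growth_def
    proof (rule SUP_least)
      fix E assume "E \<in> {E. finite E \<and> separated_set S_Q QD shift (Suc n) \<epsilon> E}"
      then have E: "finite E" "separated_set S_Q QD shift (Suc n) \<epsilon> E" by auto
      have c: "real (card E) \<le> K * real (Suc n)"
        using card_upper[OF e _ E] unfolding K_def
        by (metis of_nat_le_iff of_nat_mult le_add1 plus_1_eq_Suc)
      have Kn: "K * real (Suc n) > 0" using K by simp
      have "ln (real (card E)) \<le> ln (K * real (Suc n))"
      proof (cases "card E = 0")
        case True
        have "K * 1 \<le> K * real (Suc n)" using K by (intro mult_left_mono) auto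
        then have "K * real (Suc n) \<ge> 1" using K by linarith
        then show ?thesis using True by simp
      next
        case False
        then show ?thesis using c by simp
      qed
      then show "ereal (ln (real (card E)) / real (Suc n)) \<le> ereal (ln (K * real (Suc n)) / real (Suc n))"
        by (simp add: divide_right_mono)
    qed
    have "limsup (\<lambda>n. sep_growth S_Q QD shift \<epsilon> (Suc n))
          \<le> limsup (\<lambda>n. ereal (ln (K * real (Suc n)) / real (Suc n)))"
      by (rule Limsup_mono) (rule always_eventually, rule allI, rule up)
    also have "\<dots> = ereal 0"
    proof -
      have "(\<lambda>n. ereal (ln (K * real (Suc n)) / real (Suc n))) \<longlonglongrightarrow> ereal 0"
        using K by (intro tendsto_ereal lim0) simp
      then show ?thesis by (intro lim_imp_Limsup) simp_all
    qed
    finally show "limsup (\<lambda>n. sep_growth S_Q QD shift \<epsilon> (Suc n)) \<le> 0" by (simp add: zero_ereal_def)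
  next
    have low: "0 \<le> sep_growth S_Q QD shift \<epsilon> (Suc n)" for n
    proof -
      have "{pt_a} \<in> {E. finite E \<and> separated_set S_Q QD shift (Suc n) \<epsilon> E}"
        unfolding separated_set_def S_Q_def by auto
      then have "ereal (ln (real (card {pt_a})) / real (Suc n)) \<le> sep_growth S_Q QD shift \<epsilon> (Suc n)"
        unfolding sep_growth_def by (rule SUP_upper)
      then show ?thesis by (simp add: zero_ereal_def)
    qed
    show "0 \<le> limsup (\<lambda>n. sep_growth S_Q QD shift \<epsilon> (Suc n))"
      by (rule le_Limsup) (simp_all add: low)
  qed
  have "top_entropy S_Q QD shift = (SUP \<epsilon>\<in>{(0::real)<..}. (0::ereal))"
    unfolding top_entropy_def by (intro SUP_cong refl) (simp add: each)
  also have "\<dots> = 0" by simp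
  finally show ?thesis .
qed

lemma part2: "top_entropy (hyperspace QD S_Q) (hausdorff_metric QD) (\<lambda>A. shift ` A) = \<infinity>"
proof (rule ereal_top)
  fix B :: real
  define m where "m = nat \<lceil>exp B\<rceil> + 1"
  have m: "m \<ge> 1" unfolding m_def by simp
  have "exp B < real m" unfolding m_def by linarith
  then have "ln (exp B) < ln (real m)" using m by (subst ln_less_cancel_iff) auto
  then have Bm: "ereal B \<le> ereal (ln (real m))" by simp
  define \<epsilon> where "\<epsilon> = 1/(2*(real m)^2)"
  have e: "\<epsilon> \<in> {0<..}" unfolding \<epsilon>_def using m by simp
  have "ereal (ln (real m)) \<le> limsup (\<lambda>n. sep_growth (hyperspace QD S_Q) (hausdorff_metric QD) (\<lambda>A. shift ` A) \<epsilon> (Suc n))"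
    unfolding \<epsilon>_def by (rule le_Limsup) (simp, rule always_eventually, rule allI, rule sep_lower[OF m], simp)
  also have "\<dots> \<le> top_entropy (hyperspace QD S_Q) (hausdorff_metric QD) (\<lambda>A. shift ` A)"
    unfolding top_entropy_def using e by (rule SUP_upper)
  finally show "ereal B \<le> top_entropy (hyperspace QD S_Q) (hausdorff_metric QD) (\<lambda>A. shift ` A)"
    using Bm by (blast intro: order_trans)
qed

theorem proposition5p10:
  shows "top_entropy S_Q QD shift = 0 \<and>
         top_entropy (hyperspace QD S_Q) (hausdorff_metric QD) (\<lambda>A. shift ` A) = \<infinity>"
  using part1 part2 by simp

end
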